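(* Let $C=\mathbb{S}^1\times\mathbb{R}$ be the flat Euclidean cylinder with distance $d$, $\theta_0\in\mathbb{S}^1$, $v=\{\theta_0\}\times\mathbb{R}$, and let $f:C\to C$ be a geodesic-preserving bijection with $f(v)=v$, $f(\theta_0,0)=(\theta_0,0)$ and $f(\theta_0,1)=(\theta_0,1)$. If $x,y\in C$ lie on the same vertical geodesic and $d(x,y)=1$, then $d(f(x),f(y))=1$.
   Context: $C$ carries the product of the flat metric on $\mathbb{S}^1=\mathbb{R}/\mathbb{Z}$ (circumference $1$) and the standard metric on $\mathbb{R}$. A geodesic is the image of a locally isometric immersion of the whole real line; a bijection (not assumed continuous) is geodesic-preserving if it maps every geodesic onto a geodesic as a set. Vertical geodesics are the lines $\{\theta\}\times\mathbb{R}$. *)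

theory Defs
  imports "HOL-Analysis.Analysis"
begin

text \<open>The flat cylinder C = S^1 x R with S^1 = R/Z (circumference 1).
  A point is represented by a pair (theta, t) with theta in [0,1) the
  canonical representative of the angle.\<close>

definition Cyl :: "(real \<times> real) set" where
  "Cyl = {0..<1} \<times> (UNIV :: real set)"

definition circ_dist :: "real \<Rightarrow> real \<Rightarrow> real" where
  "circ_dist a b = min (frac (a - b)) (1 - frac (a - b))"

definition cyl_dist :: "real \<times> real \<Rightarrow> real \<times> real \<Rightarrow> real" where
  "cyl_dist x y = sqrt ((circ_dist (fst x) (fst y))\<^sup>2 + (snd x - snd y)\<^sup>2)"

definition loc_isometric :: "(real \<Rightarrow> real \<times> real) \<Rightarrow> bool" where
  "loc_isometric \<gamma> \<longleftrightarrow> (\<forall>s. \<gamma> s \<in> Cyl) \<and>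
     (\<forall>s. \<exists>e>0. \<forall>a b. \<bar>a - s\<bar> < e \<longrightarrow> \<bar>b - s\<bar> < e \<longrightarrow>
        cyl_dist (\<gamma> a) (\<gamma> b) = \<bar>a - b\<bar>)"

definition cyl_geodesic :: "(real \<times> real) set \<Rightarrow> bool" where
  "cyl_geodesic G \<longleftrightarrow> (\<exists>\<gamma>. loc_isometric \<gamma> \<and> G = range \<gamma>)"

definition geodesic_preserving :: "(real \<times> real \<Rightarrow> real \<times> real) \<Rightarrow> bool" where
  "geodesic_preserving f \<longleftrightarrow> (\<forall>G. cyl_geodesic G \<longrightarrow> cyl_geodesic (f ` G))"

definition vert :: "real \<Rightarrow> (real \<times> real) set" where
  "vert \<theta> = {\<theta>} \<times> (UNIV :: real set)"

end

theory Submission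
  imports Defs
begin


lemma frac_eq_iff_Ints: "frac x = frac y \<longleftrightarrow> x - y \<in> \<int>"
proof
  assume "frac x = frac y" then obtain n where "x = y + of_int n" by (rule frac_eqE)
  then show "x - y \<in> \<int>" by simp
next
  assume "x - y \<in> \<int>"
  then have "frac (y + (x - y)) = frac y" by (rule frac_add_int_right)
  then show "frac x = frac y" by simp
qed

lemma circ_dist_nonneg: "circ_dist x y \<ge> 0"
  unfolding circ_dist_def using frac_lt_1[of "x-y"] by simp

lemma circ_dist_ex: "\<exists>m::int. circ_dist x y = \<bar>x - y - of_int m\<bar>"
proof -
  let ?w = "x - y"
  have f: "frac ?w = ?w - of_int \<lfloor>?w\<rfloor>" by (simp add: frac_def)
  show ?thesis
  proof (cases "frac ?w \<le> 1 - frac ?w")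
    case True
    then have "circ_dist x y = \<bar>?w - of_int \<lfloor>?w\<rfloor>\<bar>" unfolding circ_dist_def using f frac_ge_0[of ?w] by simp
    then show ?thesis by blast
  next
    case False
    then have "circ_dist x y = \<bar>?w - of_int (\<lfloor>?w\<rfloor> + 1)\<bar>" unfolding circ_dist_def using f frac_lt_1[of ?w] by simp
    then show ?thesis by blast
  qed
qed

lemma circ_dist_le: "circ_dist x y \<le> \<bar>x - y - of_int m\<bar>"
proof -
  let ?w = "x - y"
  have f: "?w = of_int \<lfloor>?w\<rfloor> + frac ?w" by (simp add: frac_def)
  define k where "k = \<lfloor>?w\<rfloor> - m"
  have e: "x - y - of_int m = frac ?w + of_int k" using f unfolding k_def by simp
  show ?thesis
  proof (cases "k \<ge> 0")
    case True
    then have "frac ?w \<le> \<bar>frac ?w + of_int k\<bar>" using frac_ge_0[of ?w] by simp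
    then show ?thesis unfolding circ_dist_def e by simp
  next
    case False
    then have "k \<le> -1" by simp
    then have "1 - frac ?w \<le> \<bar>frac ?w + of_int k\<bar>" using frac_lt_1[of ?w] by linarith
    then show ?thesis unfolding circ_dist_def e by simp
  qed
qed

lemma circ_dist_frac:
  assumes "\<bar>X - Y\<bar> \<le> 1/2"
  shows "circ_dist (frac X) (frac Y) = \<bar>X - Y\<bar>"
proof -
  have d: "frac X - frac Y = X - Y - of_int (\<lfloor>X\<rfloor> - \<lfloor>Y\<rfloor>)" by (simp add: frac_def)
  have le: "circ_dist (frac X) (frac Y) \<le> \<bar>X - Y\<bar>"
    using circ_dist_le[of "frac X" "frac Y" "-(\<lfloor>X\<rfloor> - \<lfloor>Y\<rfloor>)"] d by simp
  obtain m where m: "circ_dist (frac X) (frac Y) = \<bar>frac X - frac Y - of_int m\<bar>" using circ_dist_ex by blast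
  define k where "k = \<lfloor>X\<rfloor> - \<lfloor>Y\<rfloor> + m"
  have e: "frac X - frac Y - of_int m = X - Y - of_int k" using d unfolding k_def by simp
  show ?thesis
  proof (cases "k = 0")
    case True then show ?thesis using m e by simp
  next
    case False
    then have "\<bar>of_int k::real\<bar> \<ge> 1" by linarith
    then have "\<bar>X - Y - of_int k\<bar> \<ge> 1/2" using assms by linarith
    then show ?thesis using le m e assms by linarith
  qed
qed

lemma circ_dist_self [simp]: "circ_dist x x = 0"
  unfolding circ_dist_def by simp



lemma cyl_dist_pair: "cyl_dist (a, b) (c, d) = sqrt ((circ_dist a c)\<^sup>2 + (b - d)\<^sup>2)"
  by (simp add: cyl_dist_def)

lemma line_loc_iso:
  assumes u: "u1\<^sup>2 + u2\<^sup>2 = 1"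
  shows "loc_isometric (\<lambda>s. (frac (c + u1 * s), d + u2 * s))"
  unfolding loc_isometric_def
proof (intro conjI allI)
  fix s show "(frac (c + u1 * s), d + u2 * s) \<in> Cyl"
    unfolding Cyl_def using frac_lt_1 frac_ge_0 by auto
next
  fix s
  show "\<exists>e>0. \<forall>a b. \<bar>a - s\<bar> < e \<longrightarrow> \<bar>b - s\<bar> < e \<longrightarrow>
        cyl_dist (frac (c + u1 * a), d + u2 * a) (frac (c + u1 * b), d + u2 * b) = \<bar>a - b\<bar>"
  proof (intro exI[of _ "1/4"] conjI allI impI)
    fix a b assume "\<bar>a - s\<bar> < 1/4" "\<bar>b - s\<bar> < 1/4"
    then have ab: "\<bar>a - b\<bar> \<le> 1/2" by linarith
    have "u1\<^sup>2 \<le> 1" using u by (metis le_add_same_cancel1 zero_le_power2)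
    then have "\<bar>u1\<bar> \<le> 1" by (simp add: abs_square_le_1)
    then have "\<bar>u1\<bar> * \<bar>a - b\<bar> \<le> 1 * (1/2)" using ab by (intro mult_mono) auto
    then have "\<bar>(c + u1 * a) - (c + u1 * b)\<bar> \<le> 1/2"
      by (simp add: right_diff_distrib[symmetric] abs_mult)
    then have cd: "circ_dist (frac (c + u1 * a)) (frac (c + u1 * b)) = \<bar>u1 * (a - b)\<bar>"
      using circ_dist_frac by (simp add: right_diff_distrib)
    have "(u1 * (a - b))\<^sup>2 + (d + u2 * a - (d + u2 * b))\<^sup>2 = (u1\<^sup>2 + u2\<^sup>2) * (a - b)\<^sup>2"
      by (simp add: power2_eq_square algebra_simps)
    also have "\<dots> = (a - b)\<^sup>2" using u by simp
    finally show "cyl_dist (frac (c + u1 * a), d + u2 * a) (frac (c + u1 * b), d + u2 * b) = \<bar>a - b\<bar>"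
      unfolding cyl_dist_pair cd power2_abs by simp
  qed auto
qed

definition Sl :: "real \<Rightarrow> real \<Rightarrow> (real \<times> real) set" where
  "Sl c p = range (\<lambda>t. (frac (c + p * t), t))"

definition Hor :: "real \<Rightarrow> (real \<times> real) set" where
  "Hor d = {0..<1} \<times> {d}"

lemma mem_Sl: "(x, t) \<in> Sl c p \<longleftrightarrow> x = frac (c + p * t)"
  unfolding Sl_def by auto

lemma Sl_Cyl: "Sl c p \<subseteq> Cyl"
  unfolding Sl_def Cyl_def using frac_lt_1 frac_ge_0 by auto

lemma Hor_Cyl: "Hor d \<subseteq> Cyl"
  unfolding Hor_def Cyl_def by auto

lemma geo_Sl: "cyl_geodesic (Sl c p)"
proof -
  define r where "r = sqrt (1 + p\<^sup>2)"
  have r: "r > 0" "r\<^sup>2 = 1 + p\<^sup>2" unfolding r_def by (auto simp: add_pos_nonneg)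
  define u2 where "u2 = 1 / r"
  define u1 where "u1 = p / r"
  have pp: "1 + p\<^sup>2 \<noteq> 0" by (metis add_pos_nonneg less_numeral_extra(1) order_less_irrefl zero_le_power2)
  have u: "u1\<^sup>2 + u2\<^sup>2 = 1" unfolding u1_def u2_def using r pp
    by (simp add: power_divide add_divide_distrib[symmetric])
  have "Sl c p = range (\<lambda>s. (frac (c + u1 * s), 0 + u2 * s))"
  proof (rule set_eqI)
    fix z :: "real \<times> real"
    obtain x t where z: "z = (x, t)" by (cases z)
    have "(x, t) \<in> range (\<lambda>s. (frac (c + u1 * s), 0 + u2 * s)) \<longleftrightarrow> x = frac (c + p * t)"
    proof
      assume "(x, t) \<in> range (\<lambda>s. (frac (c + u1 * s), 0 + u2 * s))"
      then obtain s where "x = frac (c + u1 * s)" "t = u2 * s" by auto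
      moreover have "u1 * s = p * (u2 * s)" unfolding u1_def u2_def by simp
      ultimately show "x = frac (c + p * t)" by simp
    next
      assume x: "x = frac (c + p * t)"
      have e1: "u1 * (t * r) = p * t" and e2: "u2 * (t * r) = t" unfolding u1_def u2_def using r by auto
      have "(x, t) = (frac (c + u1 * (t * r)), 0 + u2 * (t * r))" unfolding e1 e2 using x by simp
      then show "(x, t) \<in> range (\<lambda>s. (frac (c + u1 * s), 0 + u2 * s))" by blast
    qed
    then show "z \<in> Sl c p \<longleftrightarrow> z \<in> range (\<lambda>s. (frac (c + u1 * s), 0 + u2 * s))"
      unfolding z mem_Sl by simp
  qed
  then show ?thesis unfolding cyl_geodesic_def using line_loc_iso[OF u] by blast
qed

lemma geo_Hor: "cyl_geodesic (Hor d)"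
proof -
  have "Hor d = range (\<lambda>s. (frac (0 + 1 * s), d + 0 * s))"
  proof (rule set_eqI)
    fix z :: "real \<times> real"
    obtain x t where z: "z = (x, t)" by (cases z)
    have "(x, t) \<in> range (\<lambda>s. (frac (0 + 1 * s), d + 0 * s)) \<longleftrightarrow> x \<in> {0..<1} \<and> t = d"
    proof
      assume "(x, t) \<in> range (\<lambda>s. (frac (0 + 1 * s), d + 0 * s))"
      then obtain s where "x = frac s" "t = d" by auto
      then show "x \<in> {0..<1} \<and> t = d" using frac_lt_1[of s] by simp
    next
      assume x: "x \<in> {0..<1} \<and> t = d"
      then have "(x, t) = (frac (0 + 1 * x), d + 0 * x)" by simp
      then show "(x, t) \<in> range (\<lambda>s. (frac (0 + 1 * s), d + 0 * s))" by blast
    qed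
    then show "z \<in> Hor d \<longleftrightarrow> z \<in> range (\<lambda>s. (frac (0 + 1 * s), d + 0 * s))"
      unfolding z Hor_def by simp
  qed
  then show ?thesis unfolding cyl_geodesic_def using line_loc_iso[of 1 0 0 d] by auto
qed

lemma vert_Sl: "\<theta> \<in> {0..<1} \<Longrightarrow> vert \<theta> = Sl \<theta> 0"
  unfolding vert_def Sl_def by auto

lemma triple:
  fixes P :: "real \<Rightarrow> 'a::real_inner"
  assumes iso: "\<And>a b. a \<in> I \<Longrightarrow> b \<in> I \<Longrightarrow> dist (P a) (P b) = \<bar>a - b\<bar>"
    and "x \<in> I" "y \<in> I" "z \<in> I" "x \<le> y" "y \<le> z"
  shows "(y - x) *\<^sub>R (P z - P y) = (z - y) *\<^sub>R (P y - P x)"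
proof -
  have n1: "norm (P y - P x) = y - x" using iso[of y x] assms by (simp add: dist_norm)
  have n2: "norm (P z - P y) = z - y" using iso[of z y] assms by (simp add: dist_norm)
  have n3: "norm ((P y - P x) + (P z - P y)) = z - x" using iso[of z x] assms by (simp add: dist_norm)
  have "norm ((P y - P x) + (P z - P y)) = norm (P y - P x) + norm (P z - P y)"
    using n1 n2 n3 by simp
  then have "norm (P y - P x) *\<^sub>R (P z - P y) = norm (P z - P y) *\<^sub>R (P y - P x)"
    by (rule norm_triangle_eq[THEN iffD1])
  then show ?thesis using n1 n2 by simp
qed

lemma iso_affine:
  fixes P :: "real \<Rightarrow> 'a::real_inner"
  assumes e: "e > 0"
    and iso: "\<And>a b. \<bar>a - s\<bar> < e \<Longrightarrow> \<bar>b - s\<bar> < e \<Longrightarrow> dist (P a) (P b) = \<bar>a - b\<bar>"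
  shows "\<exists>u. norm u = 1 \<and> (\<forall>a. \<bar>a - s\<bar> < e \<longrightarrow> P a = P s + (a - s) *\<^sub>R u)"
proof -
  define I where "I = {a. \<bar>a - s\<bar> < e}"
  have isoI: "\<And>a b. a \<in> I \<Longrightarrow> b \<in> I \<Longrightarrow> dist (P a) (P b) = \<bar>a - b\<bar>" using iso unfolding I_def by auto
  define s1 where "s1 = s + e/2"
  have s1: "s1 \<in> I" "s \<in> I" "s < s1" using e unfolding I_def s1_def by auto
  define u where "u = (1 / (s1 - s)) *\<^sub>R (P s1 - P s)"
  have Ps1: "P s1 - P s = (s1 - s) *\<^sub>R u" unfolding u_def using s1 by simp
  have nu: "norm u = 1" unfolding u_def using isoI[of s1 s] s1 by (simp add: dist_norm)
  have "P a = P s + (a - s) *\<^sub>R u" if a: "a \<in> I" for a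
  proof -
    consider "a < s" | "a = s" | "s < a" "a \<le> s1" | "s1 < a" by linarith
    then show ?thesis
    proof cases
      case 1
      have "(s - a) *\<^sub>R (P s1 - P s) = (s1 - s) *\<^sub>R (P s - P a)"
        using triple[OF isoI, where x=a and y=s and z=s1] a s1 1 by simp
      then have "(s1 - s) *\<^sub>R ((s - a) *\<^sub>R u) = (s1 - s) *\<^sub>R (P s - P a)"
        using Ps1 by (simp add: algebra_simps)
      moreover have "s1 - s \<noteq> 0" using s1 by simp
      ultimately have "(s - a) *\<^sub>R u = P s - P a" by (metis scaleR_cancel_left)
      then show ?thesis by (simp add: algebra_simps)
    next
      case 2 then show ?thesis by simp
    next
      case 3
      have "(a - s) *\<^sub>R (P s1 - P a) = (s1 - a) *\<^sub>R (P a - P s)"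
        using triple[OF isoI, where x=s and y=a and z=s1] a s1 3 by simp
      moreover have "P s1 - P a = (s1 - s) *\<^sub>R u - (P a - P s)" using Ps1 by (simp add: algebra_simps)
      ultimately have h: "(a - s) *\<^sub>R ((s1 - s) *\<^sub>R u - (P a - P s)) = (s1 - a) *\<^sub>R (P a - P s)" by simp
      define X where "X = P a - P s"
      have h2: "(a - s) *\<^sub>R ((s1 - s) *\<^sub>R u - X) = (s1 - a) *\<^sub>R X" using h unfolding X_def .
      have "(a - s) *\<^sub>R ((s1 - s) *\<^sub>R u) = (a - s) *\<^sub>R X + (s1 - a) *\<^sub>R X"
        using h2 by (simp add: scaleR_diff_right algebra_simps)
      also have "\<dots> = (s1 - s) *\<^sub>R X" by (simp add: scaleR_left_distrib[symmetric])
      finally have "(s1 - s) *\<^sub>R ((a - s) *\<^sub>R u) = (s1 - s) *\<^sub>R (P a - P s)"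
        unfolding X_def by (simp add: mult.commute)
      moreover have "s1 - s \<noteq> 0" using s1 by simp
      ultimately have "(a - s) *\<^sub>R u = P a - P s" by (metis scaleR_cancel_left)
      then show ?thesis by (simp add: algebra_simps)
    next
      case 4
      have "(s1 - s) *\<^sub>R (P a - P s1) = (a - s1) *\<^sub>R (P s1 - P s)"
        using triple[OF isoI, where x=s and y=s1 and z=a] a s1 4 by simp
      then have "(s1 - s) *\<^sub>R (P a - P s1) = (s1 - s) *\<^sub>R ((a - s1) *\<^sub>R u)"
        using Ps1 by (simp add: algebra_simps)
      moreover have "s1 - s \<noteq> 0" using s1 by simp
      ultimately have "P a - P s1 = (a - s1) *\<^sub>R u" by (metis scaleR_cancel_left)
      then have q1: "P a = (a - s1) *\<^sub>R u + P s1" by (rule diff_eq_eq[THEN iffD1])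
      have q2: "P s1 = (s1 - s) *\<^sub>R u + P s" using Ps1 by (rule diff_eq_eq[THEN iffD1])
      have "P a = (a - s1) *\<^sub>R u + ((s1 - s) *\<^sub>R u + P s)" using q1 q2 by simp
      then show ?thesis by (simp add: algebra_simps)
    qed
  qed
  then have "\<forall>a. \<bar>a - s\<bar> < e \<longrightarrow> P a = P s + (a - s) *\<^sub>R u" unfolding I_def by blast
  then show ?thesis using nu by blast
qed



lemma loc_form:
  assumes "loc_isometric \<gamma>"
  shows "\<exists>e>0. \<exists>u1 u2. u1\<^sup>2 + u2\<^sup>2 = 1 \<and> (\<forall>a. \<bar>a - s\<bar> < e \<longrightarrow>
     (\<exists>m::int. fst (\<gamma> a) = fst (\<gamma> s) + (a - s) * u1 + of_int m) \<and> snd (\<gamma> a) = snd (\<gamma> s) + (a - s) * u2)"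
proof -
  obtain e0 where e0: "e0 > 0" and iso0: "\<And>a b. \<bar>a - s\<bar> < e0 \<Longrightarrow> \<bar>b - s\<bar> < e0 \<Longrightarrow>
      cyl_dist (\<gamma> a) (\<gamma> b) = \<bar>a - b\<bar>"
    using assms unfolding loc_isometric_def by metis
  define e where "e = min e0 (1/4)"
  have e: "e > 0" "e \<le> e0" "e \<le> 1/4" using e0 unfolding e_def by auto
  define \<theta> where "\<theta> a = fst (\<gamma> a)" for a
  define z where "z a = snd (\<gamma> a)" for a
  have gam: "\<gamma> a = (\<theta> a, z a)" for a unfolding \<theta>_def z_def by simp
  have cd: "cyl_dist (\<gamma> a) (\<gamma> b) = sqrt ((circ_dist (\<theta> a) (\<theta> b))\<^sup>2 + (z a - z b)\<^sup>2)" for a b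
    unfolding gam cyl_dist_def by simp
  have cle: "circ_dist (\<theta> a) (\<theta> b) \<le> cyl_dist (\<gamma> a) (\<gamma> b)" for a b
    unfolding cd by (rule real_le_rsqrt) simp
  define M where "M a = (SOME m::int. circ_dist (\<theta> a) (\<theta> s) = \<bar>\<theta> a - \<theta> s - of_int m\<bar>)" for a
  have M: "circ_dist (\<theta> a) (\<theta> s) = \<bar>\<theta> a - \<theta> s - of_int (M a)\<bar>" for a
    unfolding M_def by (rule someI_ex) (rule circ_dist_ex)
  define L where "L a = \<theta> a - of_int (M a)" for a
  have Ls: "\<bar>L a - \<theta> s\<bar> < 1/4" if "\<bar>a - s\<bar> < e" for a
  proof -
    have "\<bar>L a - \<theta> s\<bar> = circ_dist (\<theta> a) (\<theta> s)" using M[of a] unfolding L_def by simp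
    also have "\<dots> \<le> \<bar>a - s\<bar>" using cle[of a s] iso0[of a s] that e by simp
    finally show ?thesis using that e by simp
  qed
  have cL: "circ_dist (\<theta> a) (\<theta> b) = \<bar>L a - L b\<bar>" if "\<bar>a - s\<bar> < e" "\<bar>b - s\<bar> < e" for a b
  proof -
    have Lab: "\<bar>L a - L b\<bar> < 1/2" using Ls[OF that(1)] Ls[OF that(2)] by linarith
    have le: "circ_dist (\<theta> a) (\<theta> b) \<le> \<bar>L a - L b\<bar>"
      using circ_dist_le[of "\<theta> a" "\<theta> b" "M a - M b"] unfolding L_def by (simp add: algebra_simps)
    obtain k where k: "circ_dist (\<theta> a) (\<theta> b) = \<bar>\<theta> a - \<theta> b - of_int k\<bar>" using circ_dist_ex by blast
    define j where "j = M a - M b - k"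
    have kj: "\<theta> a - \<theta> b - of_int k = L a - L b + of_int j" unfolding j_def L_def by simp
    show ?thesis
    proof (cases "j = 0")
      case True then show ?thesis using k kj by simp
    next
      case False
      then have "\<bar>of_int j::real\<bar> \<ge> 1" by linarith
      then have "\<bar>L a - L b + of_int j\<bar> \<ge> 1/2" using Lab by linarith
      then show ?thesis using le k kj Lab by linarith
    qed
  qed
  define P where "P a = (L a, z a)" for a
  have isoP: "dist (P a) (P b) = \<bar>a - b\<bar>" if "\<bar>a - s\<bar> < e" "\<bar>b - s\<bar> < e" for a b
  proof -
    have "dist (P a) (P b) = sqrt ((L a - L b)\<^sup>2 + (z a - z b)\<^sup>2)"
      unfolding P_def dist_Pair_Pair dist_real_def by simp
    also have "\<dots> = cyl_dist (\<gamma> a) (\<gamma> b)" unfolding cd cL[OF that] power2_abs ..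
    also have "\<dots> = \<bar>a - b\<bar>" using iso0 that e by simp
    finally show ?thesis .
  qed
  obtain u where nu: "norm u = 1" and Pu: "\<And>a. \<bar>a - s\<bar> < e \<Longrightarrow> P a = P s + (a - s) *\<^sub>R u"
    using iso_affine[OF e(1) isoP] by blast
  obtain u1 u2 where u: "u = (u1, u2)" by (cases u)
  have u12: "u1\<^sup>2 + u2\<^sup>2 = 1" using nu unfolding u norm_Pair
    by (metis norm_Pair real_norm_def power2_abs real_sqrt_eq_1_iff)
  have "(\<exists>m::int. \<theta> a = \<theta> s + (a - s) * u1 + of_int m) \<and> z a = z s + (a - s) * u2"
    if a: "\<bar>a - s\<bar> < e" for a
  proof -
    have "L a = L s + (a - s) * u1" "z a = z s + (a - s) * u2" using Pu[OF a] unfolding P_def u by auto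
    then have "\<theta> a = \<theta> s + (a - s) * u1 + of_int (M a - M s)" "z a = z s + (a - s) * u2"
      unfolding L_def by auto
    then show ?thesis by blast
  qed
  then show ?thesis using e(1) u12 unfolding \<theta>_def z_def by blast
qed


definition Desc :: "(real \<Rightarrow> real \<times> real) \<Rightarrow> real \<Rightarrow> real \<Rightarrow> real \<Rightarrow> real \<Rightarrow> bool" where
  "Desc \<gamma> s e u1 u2 \<longleftrightarrow> e > 0 \<and> u1\<^sup>2 + u2\<^sup>2 = 1 \<and> (\<forall>a. \<bar>a - s\<bar> < e \<longrightarrow>
     (\<exists>m::int. fst (\<gamma> a) = fst (\<gamma> s) + (a - s) * u1 + of_int m) \<and> snd (\<gamma> a) = snd (\<gamma> s) + (a - s) * u2)"

lemma sq1_abs: "(u1::real)\<^sup>2 + u2\<^sup>2 = 1 \<Longrightarrow> \<bar>u1\<bar> \<le> 1"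
  by (metis abs_square_le_1 le_add_same_cancel1 zero_le_power2)

lemma Desc_unique:
  assumes D1: "Desc \<gamma> s e u1 u2" and D2: "Desc \<gamma> b e' v1 v2" and bs: "\<bar>b - s\<bar> < e"
  shows "u1 = v1 \<and> u2 = v2"
proof -
  have e: "e > 0" "e' > 0" and u: "u1\<^sup>2 + u2\<^sup>2 = 1" "v1\<^sup>2 + v2\<^sup>2 = 1"
    using D1 D2 unfolding Desc_def by auto
  define \<mu> where "\<mu> = min e' (e - \<bar>b - s\<bar>)"
  define \<delta> where "\<delta> = min (\<mu> / 2) (1/4)"
  have m0: "0 < \<mu>" "\<mu> \<le> e'" "\<mu> \<le> e - \<bar>b - s\<bar>" using e bs unfolding \<mu>_def by auto
  have "\<delta> \<le> \<mu> / 2" "\<delta> \<le> 1/4" "\<delta> > 0" unfolding \<delta>_def using m0 by auto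
  then have \<delta>: "\<delta> > 0" "\<delta> < e'" "\<delta> < e - \<bar>b - s\<bar>" "\<delta> \<le> 1/4" using m0 by linarith+
  define a where "a = b + \<delta>"
  have as: "\<bar>a - s\<bar> < e" using \<delta> unfolding a_def by linarith
  have ab: "\<bar>a - b\<bar> < e'" using \<delta> unfolding a_def by simp
  obtain m1 where m1: "fst (\<gamma> a) = fst (\<gamma> s) + (a - s) * u1 + of_int m1"
    and z1: "snd (\<gamma> a) = snd (\<gamma> s) + (a - s) * u2" using D1 as unfolding Desc_def by blast
  obtain m2 where m2: "fst (\<gamma> b) = fst (\<gamma> s) + (b - s) * u1 + of_int m2"
    and z2: "snd (\<gamma> b) = snd (\<gamma> s) + (b - s) * u2" using D1 bs unfolding Desc_def by blast
  obtain m3 where m3: "fst (\<gamma> a) = fst (\<gamma> b) + (a - b) * v1 + of_int m3"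
    and z3: "snd (\<gamma> a) = snd (\<gamma> b) + (a - b) * v2" using D2 ab unfolding Desc_def by blast
  have "\<delta> * u2 = \<delta> * v2" using z1 z2 z3 unfolding a_def by (auto simp: algebra_simps)
  then have eq2: "u2 = v2" using \<delta> by simp
  have k: "\<delta> * (u1 - v1) = of_int (m3 + m2 - m1)" using m1 m2 m3 unfolding a_def by (simp add: algebra_simps)
  have "\<bar>u1\<bar> \<le> 1" "\<bar>v1\<bar> \<le> 1" using u sq1_abs by auto
  then have "\<bar>u1 - v1\<bar> \<le> 2" by linarith
  then have "\<bar>\<delta> * (u1 - v1)\<bar> \<le> (1/4) * 2" unfolding abs_mult using \<delta>
    by (intro mult_mono) auto
  then have "\<bar>of_int (m3 + m2 - m1)::real\<bar> < 1" using k by simp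
  then have "m3 + m2 - m1 = 0" by linarith
  then have "\<delta> * (u1 - v1) = 0" using k by simp
  then have "u1 = v1" using \<delta> by simp
  then show ?thesis using eq2 by simp
qed

lemma geo_form:
  assumes "loc_isometric \<gamma>"
  shows "\<exists>c d u1 u2. u1\<^sup>2 + u2\<^sup>2 = 1 \<and> (\<forall>a. \<gamma> a = (frac (c + u1 * a), d + u2 * a))"
proof -
  have "\<forall>s. \<exists>e u1 u2. Desc \<gamma> s e u1 u2" using loc_form[OF assms] unfolding Desc_def by blast
  then obtain E U1 U2 where D: "\<And>s. Desc \<gamma> s (E s) (U1 s) (U2 s)" by metis
  define U where "U s = (U1 s, U2 s)" for s
  have "U s = U t" for s t
  proof (rule connected_local_const[where f = U and A = UNIV])
    show "\<forall>a\<in>UNIV. eventually (\<lambda>b. U a = U b) (at a within UNIV)"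
    proof
      fix a :: real
      have "E a > 0" using D[of a] unfolding Desc_def by simp
      moreover have "\<forall>x\<in>UNIV. x \<noteq> a \<and> dist x a < E a \<longrightarrow> U a = U x"
        using Desc_unique[OF D[of a] D] unfolding U_def dist_real_def by auto
      ultimately show "eventually (\<lambda>b. U a = U b) (at a within UNIV)"
        unfolding eventually_at by blast
    qed
  qed auto
  define u1 where "u1 = U1 0"
  define u2 where "u2 = U2 0"
  have Dg: "Desc \<gamma> s (E s) u1 u2" for s
    using D[of s] \<open>U s = U 0\<close> unfolding U_def u1_def u2_def by simp
  have u: "u1\<^sup>2 + u2\<^sup>2 = 1" using Dg[of 0] unfolding Desc_def by simp
  define F where "F a = (frac (fst (\<gamma> a) - a * u1), snd (\<gamma> a) - a * u2)" for a
  have "F s = F t" for s t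
  proof (rule connected_local_const[where f = F and A = UNIV])
    show "\<forall>a\<in>UNIV. eventually (\<lambda>b. F a = F b) (at a within UNIV)"
    proof
      fix a :: real
      have "E a > 0" using Dg[of a] unfolding Desc_def by simp
      moreover have "\<forall>x\<in>UNIV. x \<noteq> a \<and> dist x a < E a \<longrightarrow> F a = F x"
      proof (intro ballI impI)
        fix x :: real assume "x \<noteq> a \<and> dist x a < E a"
        then have xa: "\<bar>x - a\<bar> < E a" by (simp add: dist_real_def)
        obtain m where m: "fst (\<gamma> x) = fst (\<gamma> a) + (x - a) * u1 + of_int m"
          and z: "snd (\<gamma> x) = snd (\<gamma> a) + (x - a) * u2" using Dg[of a] xa unfolding Desc_def by blast
        have "(fst (\<gamma> x) - x * u1) - (fst (\<gamma> a) - a * u1) = of_int m" using m by (simp add: algebra_simps)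
        then have "frac (fst (\<gamma> x) - x * u1) = frac (fst (\<gamma> a) - a * u1)"
          unfolding frac_eq_iff_Ints by simp
        moreover have "snd (\<gamma> x) - x * u2 = snd (\<gamma> a) - a * u2" using z by (simp add: algebra_simps)
        ultimately show "F a = F x" unfolding F_def by simp
      qed
      ultimately show "eventually (\<lambda>b. F a = F b) (at a within UNIV)"
        unfolding eventually_at by blast
    qed
  qed auto
  define c where "c = fst (\<gamma> 0)"
  define d where "d = snd (\<gamma> 0)"
  have "\<gamma> a = (frac (c + u1 * a), d + u2 * a)" for a
  proof -
    have Fa: "F a = F 0" by fact
    then have f1: "frac (fst (\<gamma> a) - a * u1) = frac c" and f2: "snd (\<gamma> a) - a * u2 = d"
      unfolding F_def c_def d_def by auto
    have "fst (\<gamma> a) \<in> {0..<1}" using assms unfolding loc_isometric_def Cyl_def by (auto simp: mem_Times_iff)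
    then have "fst (\<gamma> a) = frac (fst (\<gamma> a))" by simp
    also have "\<dots> = frac (c + u1 * a)"
      using f1 unfolding frac_eq_iff_Ints by (simp add: algebra_simps)
    finally show ?thesis using f2 by (metis prod.collapse add.commute diff_eq_eq mult.commute)
  qed
  then show ?thesis using u by blast
qed

lemma geo_cases:
  assumes "cyl_geodesic G"
  shows "(\<exists>d. G = Hor d) \<or> (\<exists>c p. G = Sl c p)"
proof -
  obtain \<gamma> where g: "loc_isometric \<gamma>" and G: "G = range \<gamma>" using assms unfolding cyl_geodesic_def by blast
  obtain c d u1 u2 where u: "u1\<^sup>2 + u2\<^sup>2 = 1" and ga: "\<And>a. \<gamma> a = (frac (c + u1 * a), d + u2 * a)"
    using geo_form[OF g] by blast
  have G2: "(x, t) \<in> G \<longleftrightarrow> (\<exists>a. x = frac (c + u1 * a) \<and> t = d + u2 * a)" for x t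
    unfolding G ga by auto
  show ?thesis
  proof (cases "u2 = 0")
    case True
    then have uu: "u1 * u1 = 1" using u by (simp add: power2_eq_square)
    have "G = Hor d"
    proof (rule set_eqI)
      fix z :: "real \<times> real"
      obtain x t where z: "z = (x, t)" by (cases z)
      have "(x, t) \<in> G \<longleftrightarrow> x \<in> {0..<1} \<and> t = d"
      proof
        assume "(x, t) \<in> G"
        then obtain a where "x = frac (c + u1 * a)" "t = d + u2 * a" using G2 by blast
        then show "x \<in> {0..<1} \<and> t = d" using True frac_lt_1 frac_ge_0 by auto
      next
        assume x: "x \<in> {0..<1} \<and> t = d"
        have "c + u1 * (u1 * (x - c)) = x" using uu by (simp add: mult.assoc[symmetric])
        then have "x = frac (c + u1 * (u1 * (x - c))) \<and> t = d + u2 * (u1 * (x - c))" using x True by simp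
        then show "(x, t) \<in> G" using G2 by blast
      qed
      then show "z \<in> G \<longleftrightarrow> z \<in> Hor d" unfolding z Hor_def by simp
    qed
    then show ?thesis by blast
  next
    case False
    have "G = Sl (c - u1 * d / u2) (u1 / u2)"
    proof (rule set_eqI)
      fix z :: "real \<times> real"
      obtain x t where z: "z = (x, t)" by (cases z)
      have "(x, t) \<in> G \<longleftrightarrow> x = frac (c - u1 * d / u2 + u1 / u2 * t)"
      proof
        assume "(x, t) \<in> G"
        then obtain a where a: "x = frac (c + u1 * a)" "t = d + u2 * a" using G2 by blast
        have eq: "c - u1 * d / u2 + u1 / u2 * t = c + u1 * a" using False a(2)
          by (simp add: field_simps)
        show "x = frac (c - u1 * d / u2 + u1 / u2 * t)" unfolding eq using a(1) by simp
      next
        assume x: "x = frac (c - u1 * d / u2 + u1 / u2 * t)"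
        have "c - u1 * d / u2 + u1 / u2 * t = c + u1 * ((t - d) / u2)" "t = d + u2 * ((t - d) / u2)"
          using False by (simp_all add: field_simps)
        then show "(x, t) \<in> G" using G2 x by metis
      qed
      then show "z \<in> G \<longleftrightarrow> z \<in> Sl (c - u1 * d / u2) (u1 / u2)" unfolding z mem_Sl by simp
    qed
    then show ?thesis by blast
  qed
qed



lemma mem_vert: "(a, b) \<in> vert \<theta> \<longleftrightarrow> a = \<theta>"
  unfolding vert_def by auto

lemma Ints_01: "(x::real) \<in> \<int> \<Longrightarrow> 0 < x \<Longrightarrow> x < 1 \<Longrightarrow> False"
  by (elim Ints_cases) auto

theorem lemma4p5:
  fixes f :: "real \<times> real \<Rightarrow> real \<times> real" and \<theta>0 :: real and x y :: "real \<times> real"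
  assumes "\<theta>0 \<in> {0..<1}"
    and "bij_betw f Cyl Cyl"
    and "geodesic_preserving f"
    and "f ` vert \<theta>0 = vert \<theta>0"
    and "f (\<theta>0, 0) = (\<theta>0, 0)"
    and "f (\<theta>0, 1) = (\<theta>0, 1)"
    and "x \<in> Cyl" and "y \<in> Cyl"
    and "\<exists>\<theta>. x \<in> vert \<theta> \<and> y \<in> vert \<theta>"
    and "cyl_dist x y = 1"
  shows "cyl_dist (f x) (f y) = 1"
proof -
  note th0 = assms(1) and fv = assms(4) and f0 = assms(5) and f1 = assms(6)
  have inj: "inj_on f Cyl" using assms(2) unfolding bij_betw_def by simp
  have gp: "\<And>G. cyl_geodesic G \<Longrightarrow> cyl_geodesic (f ` G)" using assms(3) unfolding geodesic_preserving_def by blast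
  have V0C: "vert \<theta>0 \<subseteq> Cyl" using th0 unfolding vert_def Cyl_def by auto
  have F1: "q \<in> vert \<theta>0" if q: "q \<in> Cyl" "f q \<in> vert \<theta>0" for q
  proof -
    obtain r where r: "r \<in> vert \<theta>0" "f q = f r" using q(2) fv by (metis imageE)
    then have "q = r" using inj q(1) V0C by (meson inj_onD subsetD)
    then show ?thesis using r by simp
  qed
  define h where "h t = snd (f (\<theta>0, t))" for t
  have F2: "f (\<theta>0, t) = (\<theta>0, h t)" for t
  proof -
    have "f (\<theta>0, t) \<in> vert \<theta>0" using fv by (metis imageI mem_vert)
    then show ?thesis unfolding h_def by (metis mem_vert prod.collapse)
  qed
  have hinj: "s = t" if "h s = h t" for s t
  proof -
    have "f (\<theta>0, s) = f (\<theta>0, t)" using F2 that by simp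
    moreover have "(\<theta>0, s) \<in> Cyl" "(\<theta>0, t) \<in> Cyl" using V0C by (auto simp: mem_vert)
    ultimately show ?thesis using inj by (meson inj_onD prod.inject)
  qed
  have h0: "h 0 = 0" and h1: "h 1 = 1" using F2[of 0] F2[of 1] f0 f1 by auto
  have F4: "fst (f (\<theta>, t)) = fst (f (\<theta>, t'))" if th: "\<theta> \<in> {0..<1}" for \<theta> t t'
  proof (cases "\<theta> = \<theta>0")
    case True then show ?thesis using F2 by simp
  next
    case False
    have GC: "vert \<theta> \<subseteq> Cyl" using th unfolding vert_def Cyl_def by auto
    have nomeet: False if w: "(\<theta>0, w) \<in> f ` vert \<theta>" for w
    proof -
      obtain q where q: "q \<in> vert \<theta>" "(\<theta>0, w) = f q" using w by blast
      then have "q \<in> vert \<theta>0" using F1 GC by (metis mem_vert subsetD)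
      then show False using q(1) False unfolding vert_def by auto
    qed
    have "cyl_geodesic (f ` vert \<theta>)" using gp geo_Sl vert_Sl[OF th] by metis
    then consider d where "f ` vert \<theta> = Hor d" | c p where "f ` vert \<theta> = Sl c p" using geo_cases by blast
    then show ?thesis
    proof cases
      case 1
      then have "(\<theta>0, d) \<in> f ` vert \<theta>" using th0 unfolding Hor_def by simp
      then show ?thesis using nomeet by blast
    next
      case 2
      show ?thesis
      proof (cases "p = 0")
        case True
        have "f (\<theta>, t) \<in> Sl c p" "f (\<theta>, t') \<in> Sl c p" using 2 by (auto simp: mem_vert)
        then show ?thesis using True by (metis mem_Sl prod.collapse mult_zero_left)
      next
        case False
        have "frac (c + p * ((\<theta>0 - c) / p)) = \<theta>0" using False th0 by simp
        then have "(\<theta>0, (\<theta>0 - c) / p) \<in> f ` vert \<theta>" using 2 mem_Sl by metis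
        then show ?thesis using nomeet by blast
      qed
    qed
  qed
  have F5: "snd (f (\<theta>, t)) = h t" if th: "\<theta> \<in> {0..<1}" for \<theta> t
  proof -
    have HC: "Hor t \<subseteq> Cyl" by (rule Hor_Cyl)
    have mem: "(\<theta>0, h t) \<in> f ` Hor t" using F2[of t] th0 unfolding Hor_def by (metis SigmaI imageI singletonI)
    have memth: "f (\<theta>, t) \<in> f ` Hor t" using th unfolding Hor_def by auto
    have "cyl_geodesic (f ` Hor t)" using gp geo_Hor by blast
    then consider d where "f ` Hor t = Hor d" | c p where "f ` Hor t = Sl c p" using geo_cases by blast
    then show ?thesis
    proof cases
      case 1
      then show ?thesis using mem memth unfolding Hor_def by (auto simp: mem_Times_iff)
    next
      case 2
      show ?thesis
      proof (cases "p = 0")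
        case True
        then have c: "\<theta>0 = frac c" using mem 2 mem_Sl by (metis mult_zero_left add_0_right)
        define \<theta>1 where "\<theta>1 = frac (\<theta>0 + 1/2)"
        have t1: "\<theta>1 \<in> {0..<1}" unfolding \<theta>1_def using frac_lt_1 by auto
        have "f (\<theta>1, t) \<in> Sl c p" using 2 t1 unfolding Hor_def by auto
        then have "fst (f (\<theta>1, t)) = \<theta>0" using True c by (metis mem_Sl prod.collapse mult_zero_left add_0_right)
        then have "f (\<theta>1, t) \<in> vert \<theta>0" by (metis mem_vert prod.collapse)
        moreover have "(\<theta>1, t) \<in> Cyl" using t1 unfolding Cyl_def by auto
        ultimately have "(\<theta>1, t) \<in> vert \<theta>0" using F1 by blast
        then have "frac (\<theta>0 + 1/2) = frac \<theta>0" unfolding \<theta>1_def using th0 by (simp add: mem_vert)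
        then have "(1/2::real) \<in> \<int>" unfolding frac_eq_iff_Ints by simp
        then show ?thesis using Ints_01[of "1/2"] by simp
      next
        case False
        define w1 where "w1 = (\<theta>0 - c) / p"
        define w2 where "w2 = w1 + 1 / p"
        have "frac (c + p * w1) = \<theta>0" using False th0 unfolding w1_def by simp
        then have m1: "(\<theta>0, w1) \<in> f ` Hor t" using 2 mem_Sl by metis
        have "c + p * w2 = \<theta>0 + of_int 1" using False unfolding w2_def w1_def by (simp add: field_simps)
        then have "frac (c + p * w2) = \<theta>0" using th0 by (metis frac_add_of_int_right frac_eq_id)
        then have m2: "(\<theta>0, w2) \<in> f ` Hor t" using 2 mem_Sl by metis
        have pre: "(\<theta>0, w) = f (\<theta>0, t)" if w: "(\<theta>0, w) \<in> f ` Hor t" for w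
        proof -
          obtain q where q: "q \<in> Hor t" "(\<theta>0, w) = f q" using w by blast
          then have "q \<in> vert \<theta>0" using F1 HC by (metis mem_vert subsetD)
          then have "q = (\<theta>0, t)" using q(1) unfolding Hor_def vert_def by auto
          then show ?thesis using q by simp
        qed
        have "w1 = w2" using pre[OF m1] pre[OF m2] by (metis prod.inject)
        then show ?thesis using False unfolding w2_def by simp
      qed
    qed
  qed
  have Ff: "f (\<theta>, t) = (fst (f (\<theta>, t)), h t)" if "\<theta> \<in> {0..<1}" for \<theta> t
    using F5[OF that] by (metis prod.collapse)
  have F6: "\<exists>T. p * T \<in> \<int> \<and> h T = h (t0 + 1) - h t0 - 1" if p: "p \<noteq> 0" "p \<notin> \<int>" for p t0
  proof -
    define G1 where "G1 = Sl \<theta>0 p"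
    define G2 where "G2 = Sl (\<theta>0 - p) p"
    define \<theta>' where "\<theta>' = frac (\<theta>0 + p * t0)"
    have th': "\<theta>' \<in> {0..<1}" unfolding \<theta>'_def using frac_lt_1 by auto
    have R: "(\<theta>', t0) \<in> G1" unfolding G1_def mem_Sl \<theta>'_def ..
    have S: "(\<theta>', t0 + 1) \<in> G2" unfolding G2_def mem_Sl \<theta>'_def by (simp add: algebra_simps)
    have P: "(\<theta>0, 0) \<in> G1" unfolding G1_def mem_Sl using th0 by simp
    have Q: "(\<theta>0, 1) \<in> G2" unfolding G2_def mem_Sl using th0 by simp
    have "\<theta>0 + p * (1 / p) = \<theta>0 + of_int 1" using p by simp
    then have P': "(\<theta>0, 1 / p) \<in> G1" unfolding G1_def mem_Sl using th0 by (metis frac_add_of_int_right frac_eq_id)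
    have "\<theta>0 - p + p * (1 + 1 / p) = \<theta>0 + of_int 1" using p by (simp add: algebra_simps)
    then have Q': "(\<theta>0, 1 + 1 / p) \<in> G2" unfolding G2_def mem_Sl using th0 by (metis frac_add_of_int_right frac_eq_id)
    have G1C: "G1 \<subseteq> Cyl" and G2C: "G2 \<subseteq> Cyl" unfolding G1_def G2_def by (rule Sl_Cyl)+
    have disj: "G1 \<inter> G2 = {}"
    proof (rule ccontr)
      assume "G1 \<inter> G2 \<noteq> {}"
      then obtain a b where "(a, b) \<in> G1" "(a, b) \<in> G2" by auto
      then have "frac (\<theta>0 + p * b) = frac (\<theta>0 - p + p * b)" unfolding G1_def G2_def mem_Sl by simp
      then have "(\<theta>0 + p * b) - (\<theta>0 - p + p * b) \<in> \<int>" unfolding frac_eq_iff_Ints .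
      then show False using p by simp
    qed
    have fdisj: "f ` G1 \<inter> f ` G2 = {}"
      using inj_on_image_Int[OF inj G1C G2C] disj by simp
    have fP: "(\<theta>0, 0) \<in> f ` G1" using P f0 by (metis imageI)
    have fP': "(\<theta>0, h (1 / p)) \<in> f ` G1" using P' F2 by (metis imageI)
    have fQ: "(\<theta>0, 1) \<in> f ` G2" using Q f1 by (metis imageI)
    have fQ': "(\<theta>0, h (1 + 1 / p)) \<in> f ` G2" using Q' F2 by (metis imageI)
    have hne1: "h (1 / p) \<noteq> 0" using hinj[of "1 / p" 0] h0 p by auto
    have hne2: "h (1 + 1 / p) \<noteq> 1" using hinj[of "1 + 1 / p" 1] h1 p by auto
    have "cyl_geodesic (f ` G1)" unfolding G1_def using gp geo_Sl by blast
    then consider d where "f ` G1 = Hor d" | c p where "f ` G1 = Sl c p" using geo_cases by blast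
    then obtain c1 p1 where S1: "f ` G1 = Sl c1 p1"
    proof cases
      case 1 then show ?thesis using fP fP' hne1 unfolding Hor_def by auto
    qed
    have "cyl_geodesic (f ` G2)" unfolding G2_def using gp geo_Sl by blast
    then consider d where "f ` G2 = Hor d" | c p where "f ` G2 = Sl c p" using geo_cases by blast
    then obtain c2 p2 where S2: "f ` G2 = Sl c2 p2"
    proof cases
      case 1 then show ?thesis using fQ fQ' hne2 unfolding Hor_def by auto
    qed
    have pp: "p1 = p2"
    proof (rule ccontr)
      assume ne: "p1 \<noteq> p2"
      define t where "t = (c2 - c1) / (p1 - p2)"
      have "c1 + p1 * t = c2 + p2 * t" using ne unfolding t_def by (simp add: field_simps)
      then have "(frac (c1 + p1 * t), t) \<in> Sl c1 p1" "(frac (c1 + p1 * t), t) \<in> Sl c2 p2"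
        unfolding mem_Sl by simp_all
      then show False using fdisj S1 S2 by auto
    qed
    define a where "a = h t0"
    define b where "b = h (t0 + 1)"
    define \<kappa> where "\<kappa> = fst (f (\<theta>', t0))"
    have fR: "f (\<theta>', t0) = (\<kappa>, a)" unfolding \<kappa>_def a_def using Ff[OF th'] .
    have fS: "f (\<theta>', t0 + 1) = (\<kappa>, b)" unfolding \<kappa>_def b_def using Ff[OF th'] F4[OF th'] by metis
    have "(\<kappa>, a) \<in> Sl c1 p1" using R fR S1 by (metis imageI)
    then have e1: "\<kappa> = frac (c1 + p1 * a)" unfolding mem_Sl .
    have "(\<kappa>, b) \<in> Sl c2 p1" using S fS S2 pp by (metis imageI)
    then have e2: "\<kappa> = frac (c2 + p1 * b)" unfolding mem_Sl .
    have "(\<theta>0, 0) \<in> Sl c1 p1" using fP S1 by simp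
    then have "\<theta>0 = frac (c1 + p1 * 0)" unfolding mem_Sl .
    then have e3: "\<theta>0 = frac c1" by simp
    have "(\<theta>0, 1) \<in> Sl c2 p1" using fQ S2 pp by simp
    then have e4: "\<theta>0 = frac (c2 + p1)" unfolding mem_Sl by simp
    have i1: "(c1 + p1 * a) - (c2 + p1 * b) \<in> \<int>" using e1 e2 frac_eq_iff_Ints by metis
    have i2: "c1 - (c2 + p1) \<in> \<int>" using e3 e4 frac_eq_iff_Ints by metis
    have "(c1 - (c2 + p1)) - ((c1 + p1 * a) - (c2 + p1 * b)) \<in> \<int>" using i1 i2 by (rule Ints_diff[rotated])
    moreover have "(c1 - (c2 + p1)) - ((c1 + p1 * a) - (c2 + p1 * b)) = p1 * (b - a - 1)"
      by (simp add: algebra_simps)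
    ultimately have iD: "p1 * (b - a - 1) \<in> \<int>" by simp
    have "frac (c1 + p1 * (b - a - 1)) = frac c1" using iD unfolding frac_eq_iff_Ints by simp
    then have "(\<theta>0, b - a - 1) \<in> Sl c1 p1" unfolding mem_Sl using e3 by simp
    then have "(\<theta>0, b - a - 1) \<in> f ` G1" using S1 by simp
    then obtain g where g: "g \<in> G1" "(\<theta>0, b - a - 1) = f g" by blast
    have "g \<in> vert \<theta>0" using F1 g G1C by (metis mem_vert subsetD)
    then obtain T where gT: "g = (\<theta>0, T)" unfolding vert_def by auto
    have "\<theta>0 = frac (\<theta>0 + p * T)" using g(1) unfolding gT G1_def mem_Sl .
    then have "frac (\<theta>0 + p * T) = frac \<theta>0" using th0 by simp
    then have "p * T \<in> \<int>" unfolding frac_eq_iff_Ints by simp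
    moreover have "h T = b - a - 1" using g(2) F2[of T] unfolding gT by simp
    ultimately show ?thesis unfolding a_def b_def by blast
  qed
  have F7: "h (t0 + 1) = h t0 + 1" for t0
  proof -
    obtain T1 where T1: "(1/2) * T1 \<in> \<int>" "h T1 = h (t0 + 1) - h t0 - 1"
      using F6[of "1/2" t0] Ints_01[of "1/2"] by auto
    show ?thesis
    proof (cases "T1 = 0")
      case True then show ?thesis using T1 h0 by simp
    next
      case False
      obtain n where n: "(1/2) * T1 = of_int n" using T1(1) by (elim Ints_cases) auto
      have "n \<noteq> 0" using n False by auto
      then have "\<bar>of_int n::real\<bar> \<ge> 1" by linarith
      then have T1ge: "\<bar>T1\<bar> \<ge> 2" using n by linarith
      define p2 where "p2 = 1 / (2 * \<bar>T1\<bar>)"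
      have p2: "0 < p2" "p2 < 1" unfolding p2_def using T1ge by auto
      then have "p2 \<notin> \<int>" using Ints_01 by blast
      then obtain T2 where T2: "p2 * T2 \<in> \<int>" "h T2 = h (t0 + 1) - h t0 - 1"
        using F6[of p2 t0] p2 by auto
      have "T2 = T1" using hinj T1(2) T2(2) by simp
      then have "p2 * T1 \<in> \<int>" using T2 by simp
      moreover have "\<bar>p2 * T1\<bar> = 1/2" unfolding p2_def using False by (simp add: abs_mult)
      ultimately show ?thesis
      proof -
        assume a1: "p2 * T1 \<in> \<int>" and a2: "\<bar>p2 * T1\<bar> = 1/2"
        then obtain k where "p2 * T1 = of_int k" by (elim Ints_cases) auto
        then have k: "\<bar>of_int k::real\<bar> = 1/2" using a2 by metis
        then have "k \<noteq> 0" by auto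
        then have "\<bar>of_int k::real\<bar> \<ge> 1" by linarith
        then show ?thesis using k by linarith
      qed
    qed
  qed
  obtain \<theta> where xv: "x \<in> vert \<theta>" and yv: "y \<in> vert \<theta>" using assms(9) by blast
  obtain t1 where x: "x = (\<theta>, t1)" using xv unfolding vert_def by auto
  obtain t2 where y: "y = (\<theta>, t2)" using yv unfolding vert_def by auto
  have th: "\<theta> \<in> {0..<1}" using assms(7) unfolding x Cyl_def by auto
  have "sqrt ((t1 - t2)\<^sup>2) = 1" using assms(10) unfolding x y cyl_dist_def by simp
  then have d1: "\<bar>t1 - t2\<bar> = 1" by simp
  have hd: "\<bar>h t1 - h t2\<bar> = 1"
  proof (cases "t1 \<ge> t2")
    case True
    then have "t1 = t2 + 1" using d1 by linarith
    then show ?thesis using F7[of t2] by simp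
  next
    case False
    then have "t2 = t1 + 1" using d1 by linarith
    then show ?thesis using F7[of t1] by simp
  qed
  have fx: "f x = (fst (f (\<theta>, t1)), h t1)" unfolding x using Ff[OF th] .
  have fy: "f y = (fst (f (\<theta>, t1)), h t2)" unfolding y using Ff[OF th] F4[OF th] by metis
  show ?thesis unfolding fx fy cyl_dist_def using hd by simp
qed

end
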